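(* For the class of equations $u_t=[E(x,u)u_x]_x+H(x,u)$ (with $E,H$ regarded as arbitrary smooth functions of $(x,u)$, i.e. as additional dependent variables subject to $E_t=H_t=0$), the Lie algebra of infinitesimal equivalence transformations of the form $$Y=\xi(t,x,u)\partial_t+\tau(t,x,u)\partial_x+\varphi(t,x,u)\partial_u+\chi(t,x,u,E,H)\partial_E+\eta(t,x,u,E,H)\partial_H$$ is spanned by $$Y_1=\partial_t,\quad Y_2=\partial_x,\quad Y_3=\partial_u,\quad Y_4=2t\,\partial_t+x\,\partial_x-2H\,\partial_H,$$ $$Y_5=-t\,\partial_t+E\,\partial_E+H\,\partial_H,\quad Y_6=u\,\partial_u+H\,\partial_H.$$
   Context: An equivalence transformation of the class is a non-degenerate point change of the variables $(t,x,u)$, together with a transformation of the arbitrary elements $E,H$, mapping every equation $u_t=[E(x,u)u_x]_x+H(x,u)$ of the class to an equation $\tilde u_{\tilde t}=[\tilde E(\tilde x,\tilde u)\tilde u_{\tilde x}]_{\tilde x}+\tilde H(\tilde x,\tilde u)$ of the same class. Infinitesimal equivalence transformations are the generators $Y$ as displayed whose appropriate prolongation leaves invariant the system $u_t=[Eu_x]_x+H$, $E_t=0$, $H_t=0$. *)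

theory Defs
  imports "HOL-Analysis.Analysis"
begin

text \<open>A function on a Euclidean space is C-infinity: it is continuous and, along every
basis direction, it has a partial derivative everywhere which is again C-infinity
(i.e. all partial derivatives of all orders exist and are continuous).\<close>

coinductive Cinf :: "('a::euclidean_space \<Rightarrow> real) \<Rightarrow> bool" where
  "continuous_on UNIV f \<Longrightarrow>
   (\<And>b. b \<in> Basis \<Longrightarrow> \<exists>g. (\<forall>x. ((\<lambda>s. f (x + s *\<^sub>R b)) has_real_derivative g x) (at 0)) \<and> Cinf g)
   \<Longrightarrow> Cinf f"

text \<open>Coordinates of the jet space: independent variables t, x (and u, which is an
independent variable for the arbitrary elements E, H), second-order jets of u(t,x),
and first-order jets of E(t,x,u), H(t,x,u).\<close>

datatype jv = jT | jX | jU | jUt | jUx | jUtt | jUtx | jUxx | jE | jH | jEt | jEx | jEu | jHt | jHx | jHu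

type_synonym jpt = "jv \<Rightarrow> real"
type_synonym jfun = "jpt \<Rightarrow> real"

definition pd :: "jv \<Rightarrow> jfun \<Rightarrow> jfun" where
  "pd v F p = deriv (\<lambda>s. F (p(v := s))) (p v)"

text \<open>Total derivatives for the equation for u(t,x) (applied to functions of t,x,u,u_t,u_x).\<close>
definition Dt :: "jfun \<Rightarrow> jfun" where
  "Dt F p = pd jT F p + p jUt * pd jU F p + p jUtt * pd jUt F p + p jUtx * pd jUx F p"
definition Dx :: "jfun \<Rightarrow> jfun" where
  "Dx F p = pd jX F p + p jUx * pd jU F p + p jUtx * pd jUt F p + p jUxx * pd jUx F p"

text \<open>Total derivatives for the arbitrary elements E(t,x,u), H(t,x,u)
(applied to functions of t,x,u,E,H).\<close>
definition DtA :: "jfun \<Rightarrow> jfun" where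
  "DtA F p = pd jT F p + p jEt * pd jE F p + p jHt * pd jH F p"
definition DxA :: "jfun \<Rightarrow> jfun" where
  "DxA F p = pd jX F p + p jEx * pd jE F p + p jHx * pd jH F p"
definition DuA :: "jfun \<Rightarrow> jfun" where
  "DuA F p = pd jU F p + p jEu * pd jE F p + p jHu * pd jH F p"

text \<open>Generator Y = xi d_t + tau d_x + phi d_u + chi d_E + eta d_H; its coefficients
in the prolonged vector field, indexed by jet coordinate.\<close>

definition prol_coef ::
  "(real \<Rightarrow> real \<Rightarrow> real \<Rightarrow> real) \<Rightarrow> (real \<Rightarrow> real \<Rightarrow> real \<Rightarrow> real) \<Rightarrow>
   (real \<Rightarrow> real \<Rightarrow> real \<Rightarrow> real) \<Rightarrow>
   (real \<Rightarrow> real \<Rightarrow> real \<Rightarrow> real \<Rightarrow> real \<Rightarrow> real) \<Rightarrow>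
   (real \<Rightarrow> real \<Rightarrow> real \<Rightarrow> real \<Rightarrow> real \<Rightarrow> real) \<Rightarrow> jv \<Rightarrow> jfun" where
  "prol_coef \<xi> \<tau> \<phi> chi eta v =
    (let Xi = (\<lambda>p. \<xi> (p jT) (p jX) (p jU));
         Ta = (\<lambda>p. \<tau> (p jT) (p jX) (p jU));
         Ph = (\<lambda>p. \<phi> (p jT) (p jX) (p jU));
         Ch = (\<lambda>p. chi (p jT) (p jX) (p jU) (p jE) (p jH));
         Eh = (\<lambda>p. eta (p jT) (p jX) (p jU) (p jE) (p jH));
         phi_t = (\<lambda>p. Dt Ph p - p jUt * Dt Xi p - p jUx * Dt Ta p);
         phi_x = (\<lambda>p. Dx Ph p - p jUt * Dx Xi p - p jUx * Dx Ta p)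
     in case v of
        jT \<Rightarrow> Xi | jX \<Rightarrow> Ta | jU \<Rightarrow> Ph
      | jUt \<Rightarrow> phi_t | jUx \<Rightarrow> phi_x
      | jUtt \<Rightarrow> (\<lambda>p. Dt phi_t p - p jUtt * Dt Xi p - p jUtx * Dt Ta p)
      | jUtx \<Rightarrow> (\<lambda>p. Dx phi_t p - p jUtt * Dx Xi p - p jUtx * Dx Ta p)
      | jUxx \<Rightarrow> (\<lambda>p. Dx phi_x p - p jUtx * Dx Xi p - p jUxx * Dx Ta p)
      | jE \<Rightarrow> Ch | jH \<Rightarrow> Eh
      | jEt \<Rightarrow> (\<lambda>p. DtA Ch p - p jEt * DtA Xi p - p jEx * DtA Ta p - p jEu * DtA Ph p)
      | jEx \<Rightarrow> (\<lambda>p. DxA Ch p - p jEt * DxA Xi p - p jEx * DxA Ta p - p jEu * DxA Ph p)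
      | jEu \<Rightarrow> (\<lambda>p. DuA Ch p - p jEt * DuA Xi p - p jEx * DuA Ta p - p jEu * DuA Ph p)
      | jHt \<Rightarrow> (\<lambda>p. DtA Eh p - p jHt * DtA Xi p - p jHx * DtA Ta p - p jHu * DtA Ph p)
      | jHx \<Rightarrow> (\<lambda>p. DxA Eh p - p jHt * DxA Xi p - p jHx * DxA Ta p - p jHu * DxA Ph p)
      | jHu \<Rightarrow> (\<lambda>p. DuA Eh p - p jHt * DuA Xi p - p jHx * DuA Ta p - p jHu * DuA Ph p))"

definition all_jv :: "jv list" where
  "all_jv = [jT, jX, jU, jUt, jUx, jUtt, jUtx, jUxx, jE, jH, jEt, jEx, jEu, jHt, jHx, jHu]"

definition prY ::
  "(real \<Rightarrow> real \<Rightarrow> real \<Rightarrow> real) \<Rightarrow> (real \<Rightarrow> real \<Rightarrow> real \<Rightarrow> real) \<Rightarrow>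
   (real \<Rightarrow> real \<Rightarrow> real \<Rightarrow> real) \<Rightarrow>
   (real \<Rightarrow> real \<Rightarrow> real \<Rightarrow> real \<Rightarrow> real \<Rightarrow> real) \<Rightarrow>
   (real \<Rightarrow> real \<Rightarrow> real \<Rightarrow> real \<Rightarrow> real \<Rightarrow> real) \<Rightarrow> jfun \<Rightarrow> jfun" where
  "prY \<xi> \<tau> \<phi> chi eta F p = sum_list (map (\<lambda>v. prol_coef \<xi> \<tau> \<phi> chi eta v p * pd v F p) all_jv)"

text \<open>u_t = [E u_x]_x + H, i.e. u_t = E u_xx + (E_x + E_u u_x) u_x + H, together with
E_t = 0 and H_t = 0.\<close>
definition Delta1 :: jfun where
  "Delta1 p = p jUt - (p jE * p jUxx + p jEx * p jUx + p jEu * (p jUx)^2 + p jH)"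
definition Delta2 :: jfun where
  "Delta2 p = p jEt"
definition Delta3 :: jfun where
  "Delta3 p = p jHt"

definition on_system :: "jpt \<Rightarrow> bool" where
  "on_system p \<longleftrightarrow> Delta1 p = 0 \<and> Delta2 p = 0 \<and> Delta3 p = 0"

definition inf_equiv_transf ::
  "(real \<Rightarrow> real \<Rightarrow> real \<Rightarrow> real) \<Rightarrow> (real \<Rightarrow> real \<Rightarrow> real \<Rightarrow> real) \<Rightarrow>
   (real \<Rightarrow> real \<Rightarrow> real \<Rightarrow> real) \<Rightarrow>
   (real \<Rightarrow> real \<Rightarrow> real \<Rightarrow> real \<Rightarrow> real \<Rightarrow> real) \<Rightarrow>
   (real \<Rightarrow> real \<Rightarrow> real \<Rightarrow> real \<Rightarrow> real \<Rightarrow> real) \<Rightarrow> bool" where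
  "inf_equiv_transf \<xi> \<tau> \<phi> chi eta \<longleftrightarrow>
     (\<forall>p. on_system p \<longrightarrow>
        prY \<xi> \<tau> \<phi> chi eta Delta1 p = 0 \<and>
        prY \<xi> \<tau> \<phi> chi eta Delta2 p = 0 \<and>
        prY \<xi> \<tau> \<phi> chi eta Delta3 p = 0)"

end

theory Submission imports Defs begin

definition d1 :: "(real \<Rightarrow> real \<Rightarrow> real \<Rightarrow> real) \<Rightarrow> real \<Rightarrow> real \<Rightarrow> real \<Rightarrow> real"
  where "d1 F t x u = deriv (\<lambda>s. F s x u) t"
definition d2 :: "(real \<Rightarrow> real \<Rightarrow> real \<Rightarrow> real) \<Rightarrow> real \<Rightarrow> real \<Rightarrow> real \<Rightarrow> real"
  where "d2 F t x u = deriv (\<lambda>s. F t s u) x"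
definition d3 :: "(real \<Rightarrow> real \<Rightarrow> real \<Rightarrow> real) \<Rightarrow> real \<Rightarrow> real \<Rightarrow> real \<Rightarrow> real"
  where "d3 F t x u = deriv (\<lambda>s. F t x s) u"

type_synonym f5 = "real \<Rightarrow> real \<Rightarrow> real \<Rightarrow> real \<Rightarrow> real \<Rightarrow> real"
definition e1 :: "f5 \<Rightarrow> f5" where "e1 G t x u e h = deriv (\<lambda>s. G s x u e h) t"
definition e2 :: "f5 \<Rightarrow> f5" where "e2 G t x u e h = deriv (\<lambda>s. G t s u e h) x"
definition e3 :: "f5 \<Rightarrow> f5" where "e3 G t x u e h = deriv (\<lambda>s. G t x s e h) u"
definition e4 :: "f5 \<Rightarrow> f5" where "e4 G t x u e h = deriv (\<lambda>s. G t x u s h) e"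
definition e5 :: "f5 \<Rightarrow> f5" where "e5 G t x u e h = deriv (\<lambda>s. G t x u e s) h"

lemma shift0: assumes "((\<lambda>s. f (a + s)) has_real_derivative D) (at 0)" shows "(f has_real_derivative D) (at a)"
proof -
  have "(\<lambda>s. f (s + a)) = (\<lambda>s. f (a + s))" by (simp add: add.commute)
  thus ?thesis using assms DERIV_shift[of f D 0 a] by simp
qed

lemma bfst: "u \<in> Basis \<Longrightarrow> (u, 0::'b::euclidean_space) \<in> (Basis :: ('a::euclidean_space \<times> 'b) set)"
  by (auto simp: Basis_prod_def)
lemma bsnd: "v \<in> Basis \<Longrightarrow> (0::'a::euclidean_space, v) \<in> (Basis :: ('a \<times> 'b::euclidean_space) set)"
  by (auto simp: Basis_prod_def)

lemma cinf3_1: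
  assumes "Cinf (\<lambda>(t::real, x::real, u::real). F t x u)"
  shows "(\<forall>t x u. ((\<lambda>s. F s x u) has_real_derivative d1 F t x u) (at t)) \<and> Cinf (\<lambda>(t, x, u). d1 F t x u)"
proof -
  have b: "(1::real, 0) \<in> Basis" by (intro bfst bsnd) simp_all
  from assms obtain g where g: "\<forall>y. ((\<lambda>s. (\<lambda>(t, x, u). F t x u) (y + s *\<^sub>R (1::real, 0))) has_real_derivative g y) (at 0)" and cg: "Cinf g"
    by (cases rule: Cinf.cases) (use b in blast)
  have D: "((\<lambda>s. F s x u) has_real_derivative g (t, x, u)) (at t)" for t x u
  proof -
    have "((\<lambda>s. F (t + s) x u) has_real_derivative g (t, x, u)) (at 0)"
      using g[rule_format, of "(t, x, u)"] by simp
    thus ?thesis by (rule shift0)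
  qed
  have "g = (\<lambda>(t, x, u). d1 F t x u)"
    by (auto simp: fun_eq_iff d1_def DERIV_imp_deriv[OF D])
  with D cg show ?thesis by (auto simp: d1_def DERIV_imp_deriv)
qed

lemma cinf3_2:
  assumes "Cinf (\<lambda>(t::real, x::real, u::real). F t x u)"
  shows "(\<forall>t x u. ((\<lambda>s. F t s u) has_real_derivative d2 F t x u) (at x)) \<and> Cinf (\<lambda>(t, x, u). d2 F t x u)"
proof -
  have b: "(0::real, (1::real, 0)) \<in> Basis" by (intro bfst bsnd) simp_all
  from assms obtain g where g: "\<forall>y. ((\<lambda>s. (\<lambda>(t, x, u). F t x u) (y + s *\<^sub>R (0::real, (1::real, 0)))) has_real_derivative g y) (at 0)" and cg: "Cinf g"
    by (cases rule: Cinf.cases) (use b in blast)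
  have D: "((\<lambda>s. F t s u) has_real_derivative g (t, x, u)) (at x)" for t x u
  proof -
    have "((\<lambda>s. F t (x + s) u) has_real_derivative g (t, x, u)) (at 0)"
      using g[rule_format, of "(t, x, u)"] by simp
    thus ?thesis by (rule shift0)
  qed
  have "g = (\<lambda>(t, x, u). d2 F t x u)"
    by (auto simp: fun_eq_iff d2_def DERIV_imp_deriv[OF D])
  with D cg show ?thesis by (auto simp: d2_def DERIV_imp_deriv)
qed

lemma cinf3_3:
  assumes "Cinf (\<lambda>(t::real, x::real, u::real). F t x u)"
  shows "(\<forall>t x u. ((\<lambda>s. F t x s) has_real_derivative d3 F t x u) (at u)) \<and> Cinf (\<lambda>(t, x, u). d3 F t x u)"
proof -
  have b: "(0::real, 0::real, 1::real) \<in> Basis" by (intro bfst bsnd) simp_all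
  from assms obtain g where g: "\<forall>y. ((\<lambda>s. (\<lambda>(t, x, u). F t x u) (y + s *\<^sub>R (0::real, 0::real, 1::real))) has_real_derivative g y) (at 0)" and cg: "Cinf g"
    by (cases rule: Cinf.cases) (use b in blast)
  have D: "((\<lambda>s. F t x s) has_real_derivative g (t, x, u)) (at u)" for t x u
  proof -
    have "((\<lambda>s. F t x (u + s)) has_real_derivative g (t, x, u)) (at 0)"
      using g[rule_format, of "(t, x, u)"] by simp
    thus ?thesis by (rule shift0)
  qed
  have "g = (\<lambda>(t, x, u). d3 F t x u)"
    by (auto simp: fun_eq_iff d3_def DERIV_imp_deriv[OF D])
  with D cg show ?thesis by (auto simp: d3_def DERIV_imp_deriv)
qed

lemma cinf5_1:
  assumes "Cinf (\<lambda>(t::real, x::real, u::real, e::real, h::real). G t x u e h)"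
  shows "(\<forall>t x u e h. ((\<lambda>s. G s x u e h) has_real_derivative e1 G t x u e h) (at t)) \<and> Cinf (\<lambda>(t, x, u, e, h). e1 G t x u e h)"
proof -
  have b: "(1::real, 0) \<in> Basis" by (intro bfst bsnd) simp_all
  from assms obtain g where g: "\<forall>y. ((\<lambda>s. (\<lambda>(t, x, u, e, h). G t x u e h) (y + s *\<^sub>R (1::real, 0))) has_real_derivative g y) (at 0)" and cg: "Cinf g"
    by (cases rule: Cinf.cases) (use b in blast)
  have D: "((\<lambda>s. G s x u e h) has_real_derivative g (t, x, u, e, h)) (at t)" for t x u e h
  proof -
    have "((\<lambda>s. G (t + s) x u e h) has_real_derivative g (t, x, u, e, h)) (at 0)"
      using g[rule_format, of "(t, x, u, e, h)"] by simp
    thus ?thesis by (rule shift0)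
  qed
  have "g = (\<lambda>(t, x, u, e, h). e1 G t x u e h)"
    by (auto simp: fun_eq_iff e1_def DERIV_imp_deriv[OF D])
  with D cg show ?thesis by (auto simp: e1_def DERIV_imp_deriv)
qed

lemma cinf5_2:
  assumes "Cinf (\<lambda>(t::real, x::real, u::real, e::real, h::real). G t x u e h)"
  shows "(\<forall>t x u e h. ((\<lambda>s. G t s u e h) has_real_derivative e2 G t x u e h) (at x)) \<and> Cinf (\<lambda>(t, x, u, e, h). e2 G t x u e h)"
proof -
  have b: "(0::real, (1::real, 0)) \<in> Basis" by (intro bfst bsnd) simp_all
  from assms obtain g where g: "\<forall>y. ((\<lambda>s. (\<lambda>(t, x, u, e, h). G t x u e h) (y + s *\<^sub>R (0::real, (1::real, 0)))) has_real_derivative g y) (at 0)" and cg: "Cinf g"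
    by (cases rule: Cinf.cases) (use b in blast)
  have D: "((\<lambda>s. G t s u e h) has_real_derivative g (t, x, u, e, h)) (at x)" for t x u e h
  proof -
    have "((\<lambda>s. G t (x + s) u e h) has_real_derivative g (t, x, u, e, h)) (at 0)"
      using g[rule_format, of "(t, x, u, e, h)"] by simp
    thus ?thesis by (rule shift0)
  qed
  have "g = (\<lambda>(t, x, u, e, h). e2 G t x u e h)"
    by (auto simp: fun_eq_iff e2_def DERIV_imp_deriv[OF D])
  with D cg show ?thesis by (auto simp: e2_def DERIV_imp_deriv)
qed

lemma cinf5_3:
  assumes "Cinf (\<lambda>(t::real, x::real, u::real, e::real, h::real). G t x u e h)"
  shows "(\<forall>t x u e h. ((\<lambda>s. G t x s e h) has_real_derivative e3 G t x u e h) (at u)) \<and> Cinf (\<lambda>(t, x, u, e, h). e3 G t x u e h)"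
proof -
  have b: "(0::real, (0::real, (1::real, 0))) \<in> Basis" by (intro bfst bsnd) simp_all
  from assms obtain g where g: "\<forall>y. ((\<lambda>s. (\<lambda>(t, x, u, e, h). G t x u e h) (y + s *\<^sub>R (0::real, (0::real, (1::real, 0))))) has_real_derivative g y) (at 0)" and cg: "Cinf g"
    by (cases rule: Cinf.cases) (use b in blast)
  have D: "((\<lambda>s. G t x s e h) has_real_derivative g (t, x, u, e, h)) (at u)" for t x u e h
  proof -
    have "((\<lambda>s. G t x (u + s) e h) has_real_derivative g (t, x, u, e, h)) (at 0)"
      using g[rule_format, of "(t, x, u, e, h)"] by simp
    thus ?thesis by (rule shift0)
  qed
  have "g = (\<lambda>(t, x, u, e, h). e3 G t x u e h)"
    by (auto simp: fun_eq_iff e3_def DERIV_imp_deriv[OF D])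
  with D cg show ?thesis by (auto simp: e3_def DERIV_imp_deriv)
qed

lemma cinf5_4:
  assumes "Cinf (\<lambda>(t::real, x::real, u::real, e::real, h::real). G t x u e h)"
  shows "(\<forall>t x u e h. ((\<lambda>s. G t x u s h) has_real_derivative e4 G t x u e h) (at e)) \<and> Cinf (\<lambda>(t, x, u, e, h). e4 G t x u e h)"
proof -
  have b: "(0::real, (0::real, (0::real, (1::real, 0)))) \<in> Basis" by (intro bfst bsnd) simp_all
  from assms obtain g where g: "\<forall>y. ((\<lambda>s. (\<lambda>(t, x, u, e, h). G t x u e h) (y + s *\<^sub>R (0::real, (0::real, (0::real, (1::real, 0)))))) has_real_derivative g y) (at 0)" and cg: "Cinf g"
    by (cases rule: Cinf.cases) (use b in blast)
  have D: "((\<lambda>s. G t x u s h) has_real_derivative g (t, x, u, e, h)) (at e)" for t x u e h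
  proof -
    have "((\<lambda>s. G t x u (e + s) h) has_real_derivative g (t, x, u, e, h)) (at 0)"
      using g[rule_format, of "(t, x, u, e, h)"] by simp
    thus ?thesis by (rule shift0)
  qed
  have "g = (\<lambda>(t, x, u, e, h). e4 G t x u e h)"
    by (auto simp: fun_eq_iff e4_def DERIV_imp_deriv[OF D])
  with D cg show ?thesis by (auto simp: e4_def DERIV_imp_deriv)
qed

lemma cinf5_5:
  assumes "Cinf (\<lambda>(t::real, x::real, u::real, e::real, h::real). G t x u e h)"
  shows "(\<forall>t x u e h. ((\<lambda>s. G t x u e s) has_real_derivative e5 G t x u e h) (at h)) \<and> Cinf (\<lambda>(t, x, u, e, h). e5 G t x u e h)"
proof -
  have b: "(0::real, 0::real, 0::real, 0::real, 1::real) \<in> Basis" by (intro bfst bsnd) simp_all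
  from assms obtain g where g: "\<forall>y. ((\<lambda>s. (\<lambda>(t, x, u, e, h). G t x u e h) (y + s *\<^sub>R (0::real, 0::real, 0::real, 0::real, 1::real))) has_real_derivative g y) (at 0)" and cg: "Cinf g"
    by (cases rule: Cinf.cases) (use b in blast)
  have D: "((\<lambda>s. G t x u e s) has_real_derivative g (t, x, u, e, h)) (at h)" for t x u e h
  proof -
    have "((\<lambda>s. G t x u e (h + s)) has_real_derivative g (t, x, u, e, h)) (at 0)"
      using g[rule_format, of "(t, x, u, e, h)"] by simp
    thus ?thesis by (rule shift0)
  qed
  have "g = (\<lambda>(t, x, u, e, h). e5 G t x u e h)"
    by (auto simp: fun_eq_iff e5_def DERIV_imp_deriv[OF D])
  with D cg show ?thesis by (auto simp: e5_def DERIV_imp_deriv)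
qed


lemma pd_eqI: "((\<lambda>s. F (p(v:=s))) has_real_derivative D) (at (p v)) \<Longrightarrow> pd v F p = D"
  unfolding pd_def by (rule DERIV_imp_deriv)

lemma pd_l3:
  "pd jT (\<lambda>p. F (p jT) (p jX) (p jU)) p = d1 F (p jT) (p jX) (p jU)"
  "pd jX (\<lambda>p. F (p jT) (p jX) (p jU)) p = d2 F (p jT) (p jX) (p jU)"
  "pd jU (\<lambda>p. F (p jT) (p jX) (p jU)) p = d3 F (p jT) (p jX) (p jU)"
  "v \<noteq> jT \<Longrightarrow> v \<noteq> jX \<Longrightarrow> v \<noteq> jU \<Longrightarrow> pd v (\<lambda>p. F (p jT) (p jX) (p jU)) p = 0"
  by (simp_all add: pd_def d1_def d2_def d3_def)

lemma pd_l5: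
  "pd jT (\<lambda>p. G (p jT) (p jX) (p jU) (p jE) (p jH)) p = e1 G (p jT) (p jX) (p jU) (p jE) (p jH)"
  "pd jX (\<lambda>p. G (p jT) (p jX) (p jU) (p jE) (p jH)) p = e2 G (p jT) (p jX) (p jU) (p jE) (p jH)"
  "pd jU (\<lambda>p. G (p jT) (p jX) (p jU) (p jE) (p jH)) p = e3 G (p jT) (p jX) (p jU) (p jE) (p jH)"
  "pd jE (\<lambda>p. G (p jT) (p jX) (p jU) (p jE) (p jH)) p = e4 G (p jT) (p jX) (p jU) (p jE) (p jH)"
  "pd jH (\<lambda>p. G (p jT) (p jX) (p jU) (p jE) (p jH)) p = e5 G (p jT) (p jX) (p jU) (p jE) (p jH)"
  "v \<noteq> jT \<Longrightarrow> v \<noteq> jX \<Longrightarrow> v \<noteq> jU \<Longrightarrow> v \<noteq> jE \<Longrightarrow> v \<noteq> jH \<Longrightarrow> pd v (\<lambda>p. G (p jT) (p jX) (p jU) (p jE) (p jH)) p = 0"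
  by (simp_all add: pd_def e1_def e2_def e3_def e4_def e5_def)

lemma D_l3:
  "Dt (\<lambda>p. F (p jT) (p jX) (p jU)) p = d1 F (p jT) (p jX) (p jU) + p jUt * d3 F (p jT) (p jX) (p jU)"
  "Dx (\<lambda>p. F (p jT) (p jX) (p jU)) p = d2 F (p jT) (p jX) (p jU) + p jUx * d3 F (p jT) (p jX) (p jU)"
  "DtA (\<lambda>p. F (p jT) (p jX) (p jU)) p = d1 F (p jT) (p jX) (p jU)"
  "DxA (\<lambda>p. F (p jT) (p jX) (p jU)) p = d2 F (p jT) (p jX) (p jU)"
  "DuA (\<lambda>p. F (p jT) (p jX) (p jU)) p = d3 F (p jT) (p jX) (p jU)"
  by (simp_all add: Dt_def Dx_def DtA_def DxA_def DuA_def pd_l3)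

lemma D_l5:
  "DtA (\<lambda>p. G (p jT) (p jX) (p jU) (p jE) (p jH)) p = e1 G (p jT) (p jX) (p jU) (p jE) (p jH) + p jEt * e4 G (p jT) (p jX) (p jU) (p jE) (p jH) + p jHt * e5 G (p jT) (p jX) (p jU) (p jE) (p jH)"
  "DxA (\<lambda>p. G (p jT) (p jX) (p jU) (p jE) (p jH)) p = e2 G (p jT) (p jX) (p jU) (p jE) (p jH) + p jEx * e4 G (p jT) (p jX) (p jU) (p jE) (p jH) + p jHx * e5 G (p jT) (p jX) (p jU) (p jE) (p jH)"
  "DuA (\<lambda>p. G (p jT) (p jX) (p jU) (p jE) (p jH)) p = e3 G (p jT) (p jX) (p jU) (p jE) (p jH) + p jEu * e4 G (p jT) (p jX) (p jU) (p jE) (p jH) + p jHu * e5 G (p jT) (p jX) (p jU) (p jE) (p jH)"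
  by (simp_all add: DtA_def DxA_def DuA_def pd_l5)

definition PX :: "(real \<Rightarrow> real \<Rightarrow> real \<Rightarrow> real) \<Rightarrow> (real \<Rightarrow> real \<Rightarrow> real \<Rightarrow> real) \<Rightarrow> (real \<Rightarrow> real \<Rightarrow> real \<Rightarrow> real) \<Rightarrow> jfun" where
  "PX \<xi> \<tau> \<phi> = (\<lambda>p. d2 \<phi> (p jT) (p jX) (p jU) + p jUx * d3 \<phi> (p jT) (p jX) (p jU)
      - p jUt * (d2 \<xi> (p jT) (p jX) (p jU) + p jUx * d3 \<xi> (p jT) (p jX) (p jU))
      - p jUx * (d2 \<tau> (p jT) (p jX) (p jU) + p jUx * d3 \<tau> (p jT) (p jX) (p jU)))"

lemma pc_basic:
  "prol_coef \<xi> \<tau> \<phi> chi eta jUt p = d1 \<phi> (p jT) (p jX) (p jU) + p jUt * d3 \<phi> (p jT) (p jX) (p jU)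
      - p jUt * (d1 \<xi> (p jT) (p jX) (p jU) + p jUt * d3 \<xi> (p jT) (p jX) (p jU))
      - p jUx * (d1 \<tau> (p jT) (p jX) (p jU) + p jUt * d3 \<tau> (p jT) (p jX) (p jU))"
  "prol_coef \<xi> \<tau> \<phi> chi eta jUx p = PX \<xi> \<tau> \<phi> p"
  "prol_coef \<xi> \<tau> \<phi> chi eta jUxx p = Dx (PX \<xi> \<tau> \<phi>) p
      - p jUtx * (d2 \<xi> (p jT) (p jX) (p jU) + p jUx * d3 \<xi> (p jT) (p jX) (p jU))
      - p jUxx * (d2 \<tau> (p jT) (p jX) (p jU) + p jUx * d3 \<tau> (p jT) (p jX) (p jU))"
  "prol_coef \<xi> \<tau> \<phi> chi eta jE p = chi (p jT) (p jX) (p jU) (p jE) (p jH)"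
  "prol_coef \<xi> \<tau> \<phi> chi eta jH p = eta (p jT) (p jX) (p jU) (p jE) (p jH)"
  "prol_coef \<xi> \<tau> \<phi> chi eta jEx p = e2 chi (p jT) (p jX) (p jU) (p jE) (p jH) + p jEx * e4 chi (p jT) (p jX) (p jU) (p jE) (p jH) + p jHx * e5 chi (p jT) (p jX) (p jU) (p jE) (p jH)
      - p jEt * d2 \<xi> (p jT) (p jX) (p jU) - p jEx * d2 \<tau> (p jT) (p jX) (p jU) - p jEu * d2 \<phi> (p jT) (p jX) (p jU)"
  "prol_coef \<xi> \<tau> \<phi> chi eta jEu p = e3 chi (p jT) (p jX) (p jU) (p jE) (p jH) + p jEu * e4 chi (p jT) (p jX) (p jU) (p jE) (p jH) + p jHu * e5 chi (p jT) (p jX) (p jU) (p jE) (p jH)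
      - p jEt * d3 \<xi> (p jT) (p jX) (p jU) - p jEx * d3 \<tau> (p jT) (p jX) (p jU) - p jEu * d3 \<phi> (p jT) (p jX) (p jU)"
  "prol_coef \<xi> \<tau> \<phi> chi eta jEt p = e1 chi (p jT) (p jX) (p jU) (p jE) (p jH) + p jEt * e4 chi (p jT) (p jX) (p jU) (p jE) (p jH) + p jHt * e5 chi (p jT) (p jX) (p jU) (p jE) (p jH)
      - p jEt * d1 \<xi> (p jT) (p jX) (p jU) - p jEx * d1 \<tau> (p jT) (p jX) (p jU) - p jEu * d1 \<phi> (p jT) (p jX) (p jU)"
  "prol_coef \<xi> \<tau> \<phi> chi eta jHt p = e1 eta (p jT) (p jX) (p jU) (p jE) (p jH) + p jEt * e4 eta (p jT) (p jX) (p jU) (p jE) (p jH) + p jHt * e5 eta (p jT) (p jX) (p jU) (p jE) (p jH)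
      - p jHt * d1 \<xi> (p jT) (p jX) (p jU) - p jHx * d1 \<tau> (p jT) (p jX) (p jU) - p jHu * d1 \<phi> (p jT) (p jX) (p jU)"
  by (simp_all add: prol_coef_def Let_def D_l3 D_l5 PX_def)


lemma pd_D1:
  "pd jUt Delta1 p = 1"
  "pd jUx Delta1 p = - (p jEx + p jEu * (2 * p jUx))"
  "pd jUxx Delta1 p = - p jE"
  "pd jE Delta1 p = - p jUxx"
  "pd jH Delta1 p = -1"
  "pd jEx Delta1 p = - p jUx"
  "pd jEu Delta1 p = - ((p jUx)^2)"
  "v \<in> {jT, jX, jU, jUtt, jUtx, jEt, jHt, jHx, jHu} \<Longrightarrow> pd v Delta1 p = 0"
  by (auto intro!: pd_eqI derivative_eq_intros simp: Delta1_def)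

lemma pd_D23:
  "pd jEt Delta2 p = 1"
  "v \<noteq> jEt \<Longrightarrow> pd v Delta2 p = 0"
  "pd jHt Delta3 p = 1"
  "v \<noteq> jHt \<Longrightarrow> pd v Delta3 p = 0"
  by (auto intro!: pd_eqI derivative_eq_intros simp: Delta2_def Delta3_def)

definition DX :: "(real \<Rightarrow> real \<Rightarrow> real \<Rightarrow> real) \<Rightarrow> bool" where
  "DX G \<longleftrightarrow> (\<forall>t x u. ((\<lambda>s. G t s u) has_real_derivative d2 G t x u) (at x))"
definition DU :: "(real \<Rightarrow> real \<Rightarrow> real \<Rightarrow> real) \<Rightarrow> bool" where
  "DU G \<longleftrightarrow> (\<forall>t x u. ((\<lambda>s. G t x s) has_real_derivative d3 G t x u) (at u))"
definition sm2 :: "(real \<Rightarrow> real \<Rightarrow> real \<Rightarrow> real) \<Rightarrow> bool" where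
  "sm2 F \<longleftrightarrow> DX (d2 F) \<and> DU (d2 F) \<and> DX (d3 F) \<and> DU (d3 F)"

lemma pd_PX:
  assumes "sm2 \<xi>" "sm2 \<tau>" "sm2 \<phi>"
  shows "pd jX (PX \<xi> \<tau> \<phi>) p = d2 (d2 \<phi>) (p jT) (p jX) (p jU) + p jUx * d2 (d3 \<phi>) (p jT) (p jX) (p jU)
      - p jUt * (d2 (d2 \<xi>) (p jT) (p jX) (p jU) + p jUx * d2 (d3 \<xi>) (p jT) (p jX) (p jU))
      - p jUx * (d2 (d2 \<tau>) (p jT) (p jX) (p jU) + p jUx * d2 (d3 \<tau>) (p jT) (p jX) (p jU))"
    "pd jU (PX \<xi> \<tau> \<phi>) p = d3 (d2 \<phi>) (p jT) (p jX) (p jU) + p jUx * d3 (d3 \<phi>) (p jT) (p jX) (p jU)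
      - p jUt * (d3 (d2 \<xi>) (p jT) (p jX) (p jU) + p jUx * d3 (d3 \<xi>) (p jT) (p jX) (p jU))
      - p jUx * (d3 (d2 \<tau>) (p jT) (p jX) (p jU) + p jUx * d3 (d3 \<tau>) (p jT) (p jX) (p jU))"
    "pd jUt (PX \<xi> \<tau> \<phi>) p = - (d2 \<xi> (p jT) (p jX) (p jU) + p jUx * d3 \<xi> (p jT) (p jX) (p jU))"
    "pd jUx (PX \<xi> \<tau> \<phi>) p = d3 \<phi> (p jT) (p jX) (p jU) - p jUt * d3 \<xi> (p jT) (p jX) (p jU)
      - (d2 \<tau> (p jT) (p jX) (p jU) + p jUx * d3 \<tau> (p jT) (p jX) (p jU)) - p jUx * d3 \<tau> (p jT) (p jX) (p jU)"
proof -
  from assms have h: "\<And>t x u. ((\<lambda>s. d2 \<xi> t s u) has_real_derivative d2 (d2 \<xi>) t x u) (at x)"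
    "\<And>t x u. ((\<lambda>s. d2 \<xi> t x s) has_real_derivative d3 (d2 \<xi>) t x u) (at u)"
    "\<And>t x u. ((\<lambda>s. d3 \<xi> t s u) has_real_derivative d2 (d3 \<xi>) t x u) (at x)"
    "\<And>t x u. ((\<lambda>s. d3 \<xi> t x s) has_real_derivative d3 (d3 \<xi>) t x u) (at u)"
    "\<And>t x u. ((\<lambda>s. d2 \<tau> t s u) has_real_derivative d2 (d2 \<tau>) t x u) (at x)"
    "\<And>t x u. ((\<lambda>s. d2 \<tau> t x s) has_real_derivative d3 (d2 \<tau>) t x u) (at u)"
    "\<And>t x u. ((\<lambda>s. d3 \<tau> t s u) has_real_derivative d2 (d3 \<tau>) t x u) (at x)"
    "\<And>t x u. ((\<lambda>s. d3 \<tau> t x s) has_real_derivative d3 (d3 \<tau>) t x u) (at u)"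
    "\<And>t x u. ((\<lambda>s. d2 \<phi> t s u) has_real_derivative d2 (d2 \<phi>) t x u) (at x)"
    "\<And>t x u. ((\<lambda>s. d2 \<phi> t x s) has_real_derivative d3 (d2 \<phi>) t x u) (at u)"
    "\<And>t x u. ((\<lambda>s. d3 \<phi> t s u) has_real_derivative d2 (d3 \<phi>) t x u) (at x)"
    "\<And>t x u. ((\<lambda>s. d3 \<phi> t x s) has_real_derivative d3 (d3 \<phi>) t x u) (at u)"
    by (simp_all add: sm2_def DX_def DU_def)
  show "pd jX (PX \<xi> \<tau> \<phi>) p = d2 (d2 \<phi>) (p jT) (p jX) (p jU) + p jUx * d2 (d3 \<phi>) (p jT) (p jX) (p jU)
      - p jUt * (d2 (d2 \<xi>) (p jT) (p jX) (p jU) + p jUx * d2 (d3 \<xi>) (p jT) (p jX) (p jU))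
      - p jUx * (d2 (d2 \<tau>) (p jT) (p jX) (p jU) + p jUx * d2 (d3 \<tau>) (p jT) (p jX) (p jU))"
    by (rule pd_eqI) (auto intro!: derivative_eq_intros h simp: PX_def algebra_simps)
  show "pd jU (PX \<xi> \<tau> \<phi>) p = d3 (d2 \<phi>) (p jT) (p jX) (p jU) + p jUx * d3 (d3 \<phi>) (p jT) (p jX) (p jU)
      - p jUt * (d3 (d2 \<xi>) (p jT) (p jX) (p jU) + p jUx * d3 (d3 \<xi>) (p jT) (p jX) (p jU))
      - p jUx * (d3 (d2 \<tau>) (p jT) (p jX) (p jU) + p jUx * d3 (d3 \<tau>) (p jT) (p jX) (p jU))"
    by (rule pd_eqI) (auto intro!: derivative_eq_intros h simp: PX_def algebra_simps)
  show "pd jUt (PX \<xi> \<tau> \<phi>) p = - (d2 \<xi> (p jT) (p jX) (p jU) + p jUx * d3 \<xi> (p jT) (p jX) (p jU))"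
    by (rule pd_eqI) (auto intro!: derivative_eq_intros simp: PX_def algebra_simps)
  show "pd jUx (PX \<xi> \<tau> \<phi>) p = d3 \<phi> (p jT) (p jX) (p jU) - p jUt * d3 \<xi> (p jT) (p jX) (p jU)
      - (d2 \<tau> (p jT) (p jX) (p jU) + p jUx * d3 \<tau> (p jT) (p jX) (p jU)) - p jUx * d3 \<tau> (p jT) (p jX) (p jU)"
    by (rule pd_eqI) (auto intro!: derivative_eq_intros simp: PX_def algebra_simps)
qed


lemma pc_Uxx:
  assumes "sm2 \<xi>" "sm2 \<tau>" "sm2 \<phi>"
  shows "prol_coef \<xi> \<tau> \<phi> chi eta jUxx p = ((d2 (d2 \<phi>) (p jT) (p jX) (p jU) + p jUx * d2 (d3 \<phi>) (p jT) (p jX) (p jU) - p jUt * (d2 (d2 \<xi>) (p jT) (p jX) (p jU) + p jUx * d2 (d3 \<xi>) (p jT) (p jX) (p jU)) - p jUx * (d2 (d2 \<tau>) (p jT) (p jX) (p jU) + p jUx * d2 (d3 \<tau>) (p jT) (p jX) (p jU))) + p jUx * (d3 (d2 \<phi>) (p jT) (p jX) (p jU) + p jUx * d3 (d3 \<phi>) (p jT) (p jX) (p jU) - p jUt * (d3 (d2 \<xi>) (p jT) (p jX) (p jU) + p jUx * d3 (d3 \<xi>) (p jT) (p jX) (p jU)) - p jUx * (d3 (d2 \<tau>) (p jT) (p jX) (p jU) + p jUx * d3 (d3 \<tau>) (p jT) (p jX) (p jU))) + p jUtx * (- (d2 \<xi> (p jT) (p jX) (p jU) + p jUx * d3 \<xi>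 (p jT) (p jX) (p jU))) + p jUxx * (d3 \<phi> (p jT) (p jX) (p jU) - p jUt * d3 \<xi> (p jT) (p jX) (p jU) - (d2 \<tau> (p jT) (p jX) (p jU) + p jUx * d3 \<tau> (p jT) (p jX) (p jU)) - p jUx * d3 \<tau> (p jT) (p jX) (p jU)) - p jUtx * (d2 \<xi> (p jT) (p jX) (p jU) + p jUx * d3 \<xi> (p jT) (p jX) (p jU)) - p jUxx * (d2 \<tau> (p jT) (p jX) (p jU) + p jUx * d3 \<tau> (p jT) (p jX) (p jU)))"
  by (simp add: pc_basic Dx_def pd_PX[OF assms])

lemma prY1:
  assumes "sm2 \<xi>" "sm2 \<tau>" "sm2 \<phi>"
  shows "prY \<xi> \<tau> \<phi> chi eta Delta1 p = (d1 \<phi> (p jT) (p jX) (p jU) + p jUt * d3 \<phi> (p jT) (p jX) (p jU) - p jUt * (d1 \<xi> (p jT) (p jX) (p jU) + p jUt * d3 \<xi> (p jT) (p jX) (p jU)) - p jUx * (d1 \<tau> (p jT) (p jX) (p jU) + p jUt * d3 \<tau> (p jT) (p jX) (p jU))) - (d2 \<phi> (p jT) (p jX) (p jU) + p jUx * d3 \<phi> (p jT) (p jX) (p jU) - p jUt * (d2 \<xi> (p jT) (p jX) (p jU) + p jUx * d3 \<xi> (p jT) (p jX) (p jU)) - p jUx * (d2 \<tau> (p jT) (p jX) (p jU) + p jUx * d3 \<tau> (p jT) (p jX) (p jU))) * (p jEx + p jEu * (2 * p jUx)) - p jE * ((d2 (d2 \<phi>) (p jT) (p jX) (p jU) + p jUx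 * d2 (d3 \<phi>) (p jT) (p jX) (p jU) - p jUt * (d2 (d2 \<xi>) (p jT) (p jX) (p jU) + p jUx * d2 (d3 \<xi>) (p jT) (p jX) (p jU)) - p jUx * (d2 (d2 \<tau>) (p jT) (p jX) (p jU) + p jUx * d2 (d3 \<tau>) (p jT) (p jX) (p jU))) + p jUx * (d3 (d2 \<phi>) (p jT) (p jX) (p jU) + p jUx * d3 (d3 \<phi>) (p jT) (p jX) (p jU) - p jUt * (d3 (d2 \<xi>) (p jT) (p jX) (p jU) + p jUx * d3 (d3 \<xi>) (p jT) (p jX) (p jU)) - p jUx * (d3 (d2 \<tau>) (p jT) (p jX) (p jU) + p jUx * d3 (d3 \<tau>) (p jT) (p jX) (p jU))) + p jUtx * (- (d2 \<xi> (p jT) (p jX) (p jU) + p jUx * d3 \<xi> (p jT) (p jX) (p jU))) + p jUxx * (d3 \<phi> (p jT) (p jX) (p jU) - p jUt * d3 \<xi> (p jT) (p jX) (p jU) - (d2 \<tau> (p jT) (p jX) (p jU) + p jUx * d3 \<tau> (p jT) (p jX) (p jU)) - p jUx * d3 \<tau> (p jT) (p jX) (p jU)) - p jUtx * (d2 \<xi> (p jT) (p jX) (p jU) + p jUx * d3 \<xi> (p jT) (p jX) (p jU)) - p jUxx * (d2 \<tau> (p jT) (p jX) (p jU) + p jUx * d3 \<tau> (p jT) (p jX) (p jU))) - p jUxx * chi (p jT) (p jX) (p jU) (p jE) (p jH) - eta (p jT) (p jX) (p jU) (p jE) (p jH) - p jUx * (e2 chi (p jT) (p jX) (p jU) (p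 jE) (p jH) + p jEx * e4 chi (p jT) (p jX) (p jU) (p jE) (p jH) + p jHx * e5 chi (p jT) (p jX) (p jU) (p jE) (p jH) - p jEt * d2 \<xi> (p jT) (p jX) (p jU) - p jEx * d2 \<tau> (p jT) (p jX) (p jU) - p jEu * d2 \<phi> (p jT) (p jX) (p jU)) - (p jUx)^2 * (e3 chi (p jT) (p jX) (p jU) (p jE) (p jH) + p jEu * e4 chi (p jT) (p jX) (p jU) (p jE) (p jH) + p jHu * e5 chi (p jT) (p jX) (p jU) (p jE) (p jH) - p jEt * d3 \<xi> (p jT) (p jX) (p jU) - p jEx * d3 \<tau> (p jT) (p jX) (p jU) - p jEu * d3 \<phi> (p jT) (p jX) (p jU))"
  unfolding prY_def all_jv_def by (simp add: pd_D1 pc_basic(1,2) pc_basic(4-9) pc_Uxx[OF assms] PX_def) algebra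

lemma prY2: "prY \<xi> \<tau> \<phi> chi eta Delta2 p = e1 chi (p jT) (p jX) (p jU) (p jE) (p jH) + p jEt * e4 chi (p jT) (p jX) (p jU) (p jE) (p jH) + p jHt * e5 chi (p jT) (p jX) (p jU) (p jE) (p jH) - p jEt * d1 \<xi> (p jT) (p jX) (p jU) - p jEx * d1 \<tau> (p jT) (p jX) (p jU) - p jEu * d1 \<phi> (p jT) (p jX) (p jU)"
  by (simp add: prY_def all_jv_def pd_D23 pc_basic)

lemma prY3: "prY \<xi> \<tau> \<phi> chi eta Delta3 p = e1 eta (p jT) (p jX) (p jU) (p jE) (p jH) + p jEt * e4 eta (p jT) (p jX) (p jU) (p jE) (p jH) + p jHt * e5 eta (p jT) (p jX) (p jU) (p jE) (p jH) - p jHt * d1 \<xi> (p jT) (p jX) (p jU) - p jHx * d1 \<tau> (p jT) (p jX) (p jU) - p jHu * d1 \<phi> (p jT) (p jX) (p jU)"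
  by (simp add: prY_def all_jv_def pd_D23 pc_basic)


definition P :: "real \<Rightarrow> real \<Rightarrow> real \<Rightarrow> real \<Rightarrow> real \<Rightarrow> real \<Rightarrow> real \<Rightarrow> real \<Rightarrow> real \<Rightarrow> real \<Rightarrow> real \<Rightarrow> real \<Rightarrow> jpt" where
  "P t x u q r w e h a b c d = (\<lambda>v. case v of jT \<Rightarrow> t | jX \<Rightarrow> x | jU \<Rightarrow> u | jUx \<Rightarrow> q | jUxx \<Rightarrow> r
     | jUtx \<Rightarrow> w | jE \<Rightarrow> e | jH \<Rightarrow> h | jEx \<Rightarrow> a | jEu \<Rightarrow> b | jHx \<Rightarrow> c | jHu \<Rightarrow> d
     | jUt \<Rightarrow> e * r + a * q + b * q^2 + h | _ \<Rightarrow> 0)"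

lemma P_on: "on_system (P t x u q r w e h a b c d)"
  by (simp add: on_system_def Delta1_def Delta2_def Delta3_def P_def)

lemma zconst: "(\<And>s. (f has_real_derivative 0) (at s)) \<Longrightarrow> f a = f b"
  using DERIV_isconst_all by blast

lemma lin_of_deriv: assumes "\<And>s. (f has_real_derivative k) (at s)" shows "f s = f 0 + k * s"
proof -
  have "\<And>s. ((\<lambda>s. f s - k * s) has_real_derivative 0) (at s)"
    using assms by (auto intro!: derivative_eq_intros)
  from zconst[OF this, of s 0] show ?thesis by simp
qed

lemma const_of_D: "(\<And>s. (f has_real_derivative g s) (at s)) \<Longrightarrow> (\<And>s. g s = 0) \<Longrightarrow> f a = f b"
  by (rule zconst) auto

lemma sm2_of:
  assumes "Cinf (\<lambda>(t::real, x::real, u::real). F t x u)"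
  shows "sm2 F"
proof -
  have a: "Cinf (\<lambda>(t, x, u). d2 F t x u)" "Cinf (\<lambda>(t, x, u). d3 F t x u)"
    using cinf3_2[OF assms] cinf3_3[OF assms] by auto
  show ?thesis unfolding sm2_def DX_def DU_def
    using cinf3_2[OF a(1)] cinf3_3[OF a(1)] cinf3_2[OF a(2)] cinf3_3[OF a(2)] by auto
qed

lemma backward_helper:
  "deriv (\<lambda>s. a + b * s) x = b" "deriv (\<lambda>s. b * s) x = (b::real)"
  by (auto intro!: DERIV_imp_deriv derivative_eq_intros)

theorem mainTheorem2:
  fixes \<xi> \<tau> \<phi> :: "real \<Rightarrow> real \<Rightarrow> real \<Rightarrow> real"
    and chi eta :: "real \<Rightarrow> real \<Rightarrow> real \<Rightarrow> real \<Rightarrow> real \<Rightarrow> real"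
  assumes "Cinf (\<lambda>(t::real, x::real, u::real). \<xi> t x u)"
    and "Cinf (\<lambda>(t::real, x::real, u::real). \<tau> t x u)"
    and "Cinf (\<lambda>(t::real, x::real, u::real). \<phi> t x u)"
    and "Cinf (\<lambda>(t::real, x::real, u::real, e::real, h::real). chi t x u e h)"
    and "Cinf (\<lambda>(t::real, x::real, u::real, e::real, h::real). eta t x u e h)"
  shows "inf_equiv_transf \<xi> \<tau> \<phi> chi eta \<longleftrightarrow>
    (\<exists>c1 c2 c3 c4 c5 c6 :: real.
       (\<forall>t x u. \<xi> t x u = c1 + c4 * (2 * t) + c5 * (- t)) \<and>
       (\<forall>t x u. \<tau> t x u = c2 + c4 * x) \<and>
       (\<forall>t x u. \<phi> t x u = c3 + c6 * u) \<and>
       (\<forall>t x u e h. chi t x u e h = c5 * e) \<and>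
       (\<forall>t x u e h. eta t x u e h = c4 * (- 2 * h) + c5 * h + c6 * h))"
proof -
  have smx: "sm2 \<xi>" using assms(1) by (rule sm2_of)
  have smt: "sm2 \<tau>" using assms(2) by (rule sm2_of)
  have smp: "sm2 \<phi>" using assms(3) by (rule sm2_of)
  show ?thesis
  proof
    assume "inf_equiv_transf \<xi> \<tau> \<phi> chi eta"
    then have Q1: "\<And>t x u q r w e h a b c d. prY \<xi> \<tau> \<phi> chi eta Delta1 (P t x u q r w e h a b c d) = 0"
      and Q2: "\<And>t x u q r w e h a b c d. prY \<xi> \<tau> \<phi> chi eta Delta2 (P t x u q r w e h a b c d) = 0"
      and Q3: "\<And>t x u q r w e h a b c d. prY \<xi> \<tau> \<phi> chi eta Delta3 (P t x u q r w e h a b c d) = 0"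
      using P_on unfolding inf_equiv_transf_def by blast+
    note Q1' = Q1[unfolded prY1[OF smx smt smp]]
    note Q2' = Q2[unfolded prY2]
    note Q3' = Q3[unfolded prY3]
    have F3: "e1 chi t x u e h = 0" for t x u e h
      using Q2'[of t x u 0 0 0 e h 0 0 0 0] by (simp add: P_def)
    have F1: "d1 \<tau> t x u = 0" for t x u
      using Q2'[of t x u 0 0 0 0 0 1 0 0 0] F3 by (simp add: P_def)
    have F2: "d1 \<phi> t x u = 0" for t x u
      using Q2'[of t x u 0 0 0 0 0 0 1 0 0] F3 by (simp add: P_def)
    have F4: "e1 eta t x u e h = 0" for t x u e h
      using Q3'[of t x u 0 0 0 e h 0 0 0 0] by (simp add: P_def)
    have F5: "d2 \<xi> t x u = 0" for t x u
      using Q1'[of t x u 0 0 1 1 0 0 0 0 0] Q1'[of t x u 0 0 0 1 0 0 0 0 0] F1 F2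
      by (simp add: P_def) (linarith?)
    have F6: "d3 \<xi> t x u = 0" for t x u
      using Q1'[of t x u 1 0 1 1 0 0 0 0 0] Q1'[of t x u 1 0 0 1 0 0 0 0 0] F1 F2 F5
      by (simp add: P_def) (linarith?)
    have G1: "d2 (d2 \<xi>) t x u = 0" "d3 (d2 \<xi>) t x u = 0" "d2 (d3 \<xi>) t x u = 0" "d3 (d3 \<xi>) t x u = 0" for t x u
    proof -
      have "d2 \<xi> = (\<lambda>t x u. 0)" "d3 \<xi> = (\<lambda>t x u. 0)" using F5 F6 by (auto simp: fun_eq_iff)
      thus "d2 (d2 \<xi>) t x u = 0" "d3 (d2 \<xi>) t x u = 0" "d2 (d3 \<xi>) t x u = 0" "d3 (d3 \<xi>) t x u = 0"
        by (simp_all add: d2_def[of "\<lambda>t x u. 0"] d3_def[of "\<lambda>t x u. 0"])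
    qed
    have F7: "d3 \<tau> t x u = 0" for t x u
      using Q1'[of t x u 1 1 0 1 0 0 0 0 0] Q1'[of t x u 1 0 0 1 0 0 0 0 0]
            Q1'[of t x u 0 1 0 1 0 0 0 0 0] Q1'[of t x u 0 0 0 1 0 0 0 0 0] F1 F2 F5 F6 G1
      by (simp add: P_def) (linarith?)
    have Fchi: "chi t x u e h = e * (2 * d2 \<tau> t x u - d1 \<xi> t x u)" for t x u e h
      using Q1'[of t x u 0 1 0 e h 0 0 0 0] Q1'[of t x u 0 0 0 e h 0 0 0 0] F1 F2 F5 F6 G1 F7
      by (simp add: P_def algebra_simps) (linarith?)
    have F8: "d2 \<phi> t x u = 0" for t x u
      using Q1'[of t x u 0 0 0 0 0 1 0 0 0] Q1'[of t x u 0 0 0 0 0 0 0 0 0] F1 F2 F5 F6 G1 F7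
      by (simp add: P_def) (linarith?)
    have G2: "d2 (d2 \<phi>) t x u = 0" "d3 (d2 \<phi>) t x u = 0" "d2 (d3 \<tau>) t x u = 0" "d3 (d3 \<tau>) t x u = 0" for t x u
    proof -
      have "d2 \<phi> = (\<lambda>t x u. 0)" "d3 \<tau> = (\<lambda>t x u. 0)" using F8 F7 by (auto simp: fun_eq_iff)
      thus "d2 (d2 \<phi>) t x u = 0" "d3 (d2 \<phi>) t x u = 0" "d2 (d3 \<tau>) t x u = 0" "d3 (d3 \<tau>) t x u = 0"
        by (simp_all add: d2_def[of "\<lambda>t x u. 0"] d3_def[of "\<lambda>t x u. 0"])
    qed
    have Feta: "eta t x u e h = h * (d3 \<phi> t x u - d1 \<xi> t x u)" for t x u e h
      using Q1'[of t x u 0 0 0 e h 0 0 0 0] F1 F2 F5 F6 G1 F7 F8 G2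
      by (simp add: P_def algebra_simps) (linarith?)
    have Dxi1: "\<And>t x u. ((\<lambda>s. \<xi> s x u) has_real_derivative d1 \<xi> t x u) (at t)" using cinf3_1[OF assms(1)] by blast
    have Dxi2: "\<And>t x u. ((\<lambda>s. \<xi> t s u) has_real_derivative d2 \<xi> t x u) (at x)" using cinf3_2[OF assms(1)] by blast
    have Dxi3: "\<And>t x u. ((\<lambda>s. \<xi> t x s) has_real_derivative d3 \<xi> t x u) (at u)" using cinf3_3[OF assms(1)] by blast
    have Dta1: "\<And>t x u. ((\<lambda>s. \<tau> s x u) has_real_derivative d1 \<tau> t x u) (at t)" using cinf3_1[OF assms(2)] by blast
    have Dta2: "\<And>t x u. ((\<lambda>s. \<tau> t s u) has_real_derivative d2 \<tau> t x u) (at x)" using cinf3_2[OF assms(2)] by blast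
    have Dta3: "\<And>t x u. ((\<lambda>s. \<tau> t x s) has_real_derivative d3 \<tau> t x u) (at u)" using cinf3_3[OF assms(2)] by blast
    have Dph1: "\<And>t x u. ((\<lambda>s. \<phi> s x u) has_real_derivative d1 \<phi> t x u) (at t)" using cinf3_1[OF assms(3)] by blast
    have Dph2: "\<And>t x u. ((\<lambda>s. \<phi> t s u) has_real_derivative d2 \<phi> t x u) (at x)" using cinf3_2[OF assms(3)] by blast
    have Dph3: "\<And>t x u. ((\<lambda>s. \<phi> t x s) has_real_derivative d3 \<phi> t x u) (at u)" using cinf3_3[OF assms(3)] by blast
    have Dch1: "\<And>t x u e h. ((\<lambda>s. chi s x u e h) has_real_derivative e1 chi t x u e h) (at t)" using cinf5_1[OF assms(4)] by blast
    have DDta: "\<And>t x u. ((\<lambda>s. d2 \<tau> t s u) has_real_derivative d2 (d2 \<tau>) t x u) (at x)" using smt by (simp add: sm2_def DX_def)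
    have DDph: "\<And>t x u. ((\<lambda>s. d3 \<phi> t x s) has_real_derivative d3 (d3 \<phi>) t x u) (at u)" using smp by (simp add: sm2_def DU_def)
    define Xi where "Xi = (\<lambda>t. \<xi> t 0 0)"
    define Tau where "Tau = (\<lambda>x. \<tau> 0 x 0)"
    define Phi where "Phi = (\<lambda>u. \<phi> 0 0 u)"
    have EX: "\<xi> = (\<lambda>t x u. Xi t)"
    proof (intro ext)
      fix t x u
      have "\<xi> t x u = \<xi> t 0 u" by (rule const_of_D[where g="\<lambda>s. d2 \<xi> t s u"]) (use Dxi2 F5 in auto)
      also have "\<dots> = \<xi> t 0 0" by (rule const_of_D[where g="\<lambda>s. d3 \<xi> t 0 s"]) (use Dxi3 F6 in auto)
      finally show "\<xi> t x u = Xi t" by (simp add: Xi_def)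
    qed
    have ET: "\<tau> = (\<lambda>t x u. Tau x)"
    proof (intro ext)
      fix t x u
      have "\<tau> t x u = \<tau> 0 x u" by (rule const_of_D[where g="\<lambda>s. d1 \<tau> s x u"]) (use Dta1 F1 in auto)
      also have "\<dots> = \<tau> 0 x 0" by (rule const_of_D[where g="\<lambda>s. d3 \<tau> 0 x s"]) (use Dta3 F7 in auto)
      finally show "\<tau> t x u = Tau x" by (simp add: Tau_def)
    qed
    have EP: "\<phi> = (\<lambda>t x u. Phi u)"
    proof (intro ext)
      fix t x u
      have "\<phi> t x u = \<phi> 0 x u" by (rule const_of_D[where g="\<lambda>s. d1 \<phi> s x u"]) (use Dph1 F2 in auto)
      also have "\<dots> = \<phi> 0 0 u" by (rule const_of_D[where g="\<lambda>s. d2 \<phi> 0 s u"]) (use Dph2 F8 in auto)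
      finally show "\<phi> t x u = Phi u" by (simp add: Phi_def)
    qed
    have hc: "chi t x u e h = chi 0 x u e h" for t x u e h
      by (rule const_of_D[where g="\<lambda>s. e1 chi s x u e h"]) (use Dch1 F3 in auto)
    have V1: "d1 \<xi> t x u = deriv Xi t" for t x u by (simp add: EX d1_def)
    have V2: "d2 \<tau> t x u = deriv Tau x" for t x u by (simp add: ET d2_def)
    have V3: "d3 \<phi> t x u = deriv Phi u" for t x u by (simp add: EP d3_def)
    have W2: "d2 (d2 \<tau>) t x u = deriv (deriv Tau) x" for t x u by (simp add: ET d2_def)
    have W3: "d3 (d3 \<phi>) t x u = deriv (deriv Phi) u" for t x u by (simp add: EP d3_def)
    have W4: "d2 (d3 \<phi>) t x u = 0" "d3 (d2 \<tau>) t x u = 0" for t x u by (simp_all add: EP ET d2_def d3_def)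
    have DXi: "(Xi has_real_derivative deriv Xi t) (at t)" for t
      using Dxi1[where t=t and x=0 and u=0] by (simp add: V1 Xi_def)
    have DTau: "(Tau has_real_derivative deriv Tau x) (at x)" for x
      using Dta2[where t=0 and x=x and u=0] by (simp add: V2 Tau_def)
    have DPhi: "(Phi has_real_derivative deriv Phi u) (at u)" for u
      using Dph3[where t=0 and x=0 and u=u] by (simp add: V3 Phi_def)
    have DDTau: "(deriv Tau has_real_derivative deriv (deriv Tau) x) (at x)" for x
      using DDta[where t=0 and x=x and u=0] by (simp add: V2 W2)
    have DDPhi: "(deriv Phi has_real_derivative deriv (deriv Phi) u) (at u)" for u
      using DDph[where t=0 and x=0 and u=u] by (simp add: V3 W3)
    define k where "k = deriv Xi 0"
    have Kc: "deriv Xi t = k" for t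
    proof -
      have "chi t 0 0 1 0 = 2 * deriv Tau 0 - deriv Xi t" "chi 0 0 0 1 0 = 2 * deriv Tau 0 - deriv Xi 0"
        using Fchi[of t 0 0 1 0] Fchi[of 0 0 0 1 0] by (simp_all add: V1 V2)
      thus ?thesis using hc[of t 0 0 1 0] by (simp add: k_def)
    qed
    have EC: "chi = (\<lambda>t x u e h. e * (2 * deriv Tau x - k))"
      by (intro ext) (simp add: Fchi V1 V2 Kc)
    have E2: "e2 chi t x u e h = e * (2 * deriv (deriv Tau) x)" for t x u e h
      unfolding EC e2_def by (rule DERIV_imp_deriv) (auto intro!: derivative_eq_intros DDTau)
    have E3: "e3 chi t x u e h = 0" for t x u e h
      unfolding EC e3_def by simp
    have T2: "deriv (deriv Tau) x = 0 \<and> deriv (deriv Phi) u = 0" for x u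
      using Q1'[of 0 x u 1 0 0 1 0 0 0 0 0] Q1'[of 0 x u "-1" 0 0 1 0 0 0 0 0] F1 F2 F5 F6 G1 F7 F8 G2 W2 W3 W4 E2 E3 Feta
      by (simp add: P_def) (linarith?)
    have LT: "Tau x = Tau 0 + deriv Tau 0 * x" for x
    proof (rule lin_of_deriv)
      fix s
      have "deriv Tau s = deriv Tau 0" by (rule const_of_D[where g="\<lambda>s. deriv (deriv Tau) s"]) (use DDTau T2 in auto)
      thus "(Tau has_real_derivative deriv Tau 0) (at s)" using DTau[of s] by simp
    qed
    have LP: "Phi u = Phi 0 + deriv Phi 0 * u" for u
    proof (rule lin_of_deriv)
      fix s
      have "deriv Phi s = deriv Phi 0" by (rule const_of_D[where g="\<lambda>s. deriv (deriv Phi) s"]) (use DDPhi T2 in auto)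
      thus "(Phi has_real_derivative deriv Phi 0) (at s)" using DPhi[of s] by simp
    qed
    have LX: "Xi t = Xi 0 + k * t" for t
      by (rule lin_of_deriv) (use DXi Kc in auto)
    have DT0: "deriv Tau x = deriv Tau 0" for x
      by (rule const_of_D[where g="\<lambda>s. deriv (deriv Tau) s"]) (use DDTau T2 in auto)
    have DP0: "deriv Phi u = deriv Phi 0" for u
      by (rule const_of_D[where g="\<lambda>s. deriv (deriv Phi) s"]) (use DDPhi T2 in auto)
    show "\<exists>c1 c2 c3 c4 c5 c6 :: real.
       (\<forall>t x u. \<xi> t x u = c1 + c4 * (2 * t) + c5 * (- t)) \<and>
       (\<forall>t x u. \<tau> t x u = c2 + c4 * x) \<and>
       (\<forall>t x u. \<phi> t x u = c3 + c6 * u) \<and>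
       (\<forall>t x u e h. chi t x u e h = c5 * e) \<and>
       (\<forall>t x u e h. eta t x u e h = c4 * (- 2 * h) + c5 * h + c6 * h)"
    proof (intro exI conjI allI)
      fix t x u e h
      show "\<xi> t x u = Xi 0 + deriv Tau 0 * (2 * t) + (2 * deriv Tau 0 - k) * (- t)"
        using LX[of t] by (simp add: EX algebra_simps)
      show "\<tau> t x u = Tau 0 + deriv Tau 0 * x" using LT[of x] by (simp add: ET)
      show "\<phi> t x u = Phi 0 + deriv Phi 0 * u" using LP[of u] by (simp add: EP)
      show "chi t x u e h = (2 * deriv Tau 0 - k) * e" by (simp add: EC DT0[of x] algebra_simps)
      show "eta t x u e h = deriv Tau 0 * (- 2 * h) + (2 * deriv Tau 0 - k) * h + deriv Phi 0 * h"
        by (simp add: Feta V1 V3 Kc DP0[of u] algebra_simps)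
    qed
  next
    assume "\<exists>c1 c2 c3 c4 c5 c6 :: real.
       (\<forall>t x u. \<xi> t x u = c1 + c4 * (2 * t) + c5 * (- t)) \<and>
       (\<forall>t x u. \<tau> t x u = c2 + c4 * x) \<and>
       (\<forall>t x u. \<phi> t x u = c3 + c6 * u) \<and>
       (\<forall>t x u e h. chi t x u e h = c5 * e) \<and>
       (\<forall>t x u e h. eta t x u e h = c4 * (- 2 * h) + c5 * h + c6 * h)"
    then obtain c1 c2 c3 c4 c5 c6 where c:
       "\<forall>t x u. \<xi> t x u = c1 + c4 * (2 * t) + c5 * (- t)"
       "\<forall>t x u. \<tau> t x u = c2 + c4 * x"
       "\<forall>t x u. \<phi> t x u = c3 + c6 * u"
       "\<forall>t x u e h. chi t x u e h = c5 * e"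
       "\<forall>t x u e h. eta t x u e h = c4 * (- 2 * h) + c5 * h + c6 * h" by (elim exE conjE) blast
    have ex: "\<xi> = (\<lambda>t x u. c1 + (2 * c4 - c5) * t)" using c(1) by (auto simp: fun_eq_iff algebra_simps)
    have et: "\<tau> = (\<lambda>t x u. c2 + c4 * x)" using c(2) by (auto simp: fun_eq_iff)
    have ep: "\<phi> = (\<lambda>t x u. c3 + c6 * u)" using c(3) by (auto simp: fun_eq_iff)
    have ec: "chi = (\<lambda>t x u e h. c5 * e)" using c(4) by (auto simp: fun_eq_iff)
    have ee: "eta = (\<lambda>t x u e h. (c6 + c5 - 2 * c4) * h)" using c(5) by (auto simp: fun_eq_iff algebra_simps)
    show "inf_equiv_transf \<xi> \<tau> \<phi> chi eta"
      unfolding inf_equiv_transf_def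
    proof (intro allI impI conjI)
      fix p assume os: "on_system p"
      hence ut: "p jUt = p jE * p jUxx + p jEx * p jUx + p jEu * (p jUx)^2 + p jH" and z: "p jEt = 0" "p jHt = 0"
        by (auto simp: on_system_def Delta1_def Delta2_def Delta3_def)
      show "prY \<xi> \<tau> \<phi> chi eta Delta1 p = 0"
        unfolding prY1[OF smx smt smp] unfolding ex et ep ec ee
        by (simp add: d1_def d2_def d3_def e1_def e2_def e3_def e4_def e5_def backward_helper ut) algebra
      show "prY \<xi> \<tau> \<phi> chi eta Delta2 p = 0"
        unfolding prY2 unfolding ex et ep ec ee
        by (simp add: d1_def d2_def d3_def e1_def e2_def e3_def e4_def e5_def backward_helper z)
      show "prY \<xi> \<tau> \<phi> chi eta Delta3 p = 0"
        unfolding prY3 unfolding ex et ep ec ee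
        by (simp add: d1_def d2_def d3_def e1_def e2_def e3_def e4_def e5_def backward_helper z)
    qed
  qed
qed

end
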